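(* Let $c>0$ and for integers $d\ge0$ let $\lambda_d=I_d(c)/I_0(c)$. Then $$\frac{9}{2\pi^2}\sum_{\substack{d\ge1\\ d\not\equiv0 \ (\mathrm{mod}\ 3)}}\frac{\lambda_d}{d^2}>\frac{4}{\pi^2}\sum_{\substack{d\ge1\\ d\text{ odd}}}\frac{\lambda_d}{d^2}.$$ Equivalently, for the spherical noise operator $U_g$ on $S^1$ with parameter $c$, a partition of $S^1$ into three arcs of angle $2\pi/3$ has strictly larger value of $\sum_i[\int_{S^1}1_{H_i}U_g1_{H_i}\,d\sigma-\sigma(H_i)^2]$ than a partition into two arcs of angle $\pi$.
   Context: $I_\alpha(x)=\frac{(x/2)^\alpha}{\sqrt\pi\,\Gamma(\alpha+1/2)}\int_{-1}^1e^{xt}(1-t^2)^{\alpha-1/2}\,dt$ is the modified Bessel function of the first kind. In the paper $c=\rho rs/(1-\rho^2)$ with $0<\rho<1$, $r,s>0$. $\sigma$ is normalized Haar measure on $S^1$, $g(t)=e^{ct}/(\frac1\pi\int_0^\pi e^{c\cos\theta}d\theta)$, $U_gu(x)=\int_{S^1}g(\langle x,y\rangle)u(y)\,d\sigma(y)$; $\lambda_d$ are the Fourier multipliers of $U_g$. *)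

theory Defs
  imports "HOL-Analysis.Analysis"
begin

text \<open>Modified Bessel function of the first kind, via the Poisson-type integral
  I_a(x) = (x/2)^a / (sqrt pi * Gamma(a + 1/2)) * int_{-1}^{1} e^{x t} (1 - t^2)^{a - 1/2} dt
  (Lebesgue integral; for a = 0 the integrand has integrable endpoint singularities).\<close>
definition besselI :: "real \<Rightarrow> real \<Rightarrow> real" where
  "besselI a x = (x / 2) powr a / (sqrt pi * Gamma (a + 1/2)) *
     (LBINT t=-1..1. exp (x * t) * (1 - t\<^sup>2) powr (a - 1/2))"

definition lam :: "real \<Rightarrow> nat \<Rightarrow> real" where
  "lam c d = besselI (real d) c / besselI 0 c"

end

theory Submission
  imports Defs
begin

lemma sq_le1: "t \<in> {-1..1::real} \<Longrightarrow> t\<^sup>2 \<le> 1"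
  by (simp add: abs_square_le_1 abs_le_iff)

lemma w_cont:
  assumes "0 < r"
  shows "continuous_on {-1..1} (\<lambda>t::real. exp (c*t) * (1-t\<^sup>2) powr r)"
  using assms sq_le1 by (intro continuous_intros continuous_on_powr') auto

lemma LBINT_eq_integral:
  fixes f :: "real \<Rightarrow> real"
  assumes "continuous_on {-1..1} f"
  shows "(LBINT t=-1..1. f t) = integral {-1..1} f"
proof -
  have "(LBINT t=ereal (-1)..ereal 1. f t) = integral {-1..1} f"
    by (rule interval_integral_eq_integral) (auto intro: borel_integrable_atLeastAtMost' assms)
  then show ?thesis by (simp add: one_ereal_def)
qed

lemma IBP:
  fixes n :: nat and c :: real
  assumes "n \<ge> 1"
  shows "c * integral {-1..1} (\<lambda>t. exp (c*t) * (1-t\<^sup>2) powr (real n + 1/2))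
       = (2*real n+1) * integral {-1..1} (\<lambda>t. t * (exp (c*t) * (1-t\<^sup>2) powr (real n - 1/2)))"
proof -
  define r where "r = real n + 1/2"
  define F where "F t = exp (c*t) * (1-t\<^sup>2) powr r" for t :: real
  define F' where "F' t = c * (exp (c*t) * (1-t\<^sup>2) powr r) - (2*real n+1) * (t * (exp (c*t) * (1-t\<^sup>2) powr (real n - 1/2)))" for t :: real
  have r: "r > 0" "r - 1 = real n - 1/2" "2 * r = 2*real n+1" using assms by (auto simp: r_def)
  have der: "(F has_vector_derivative F' t) (at t)" if t: "t \<in> {-1<..<1}" for t
  proof -
    have pos: "1 - t\<^sup>2 > 0" using t by (simp add: abs_square_less_1 abs_less_iff)
    have d1: "((\<lambda>t. 1 - t\<^sup>2) has_real_derivative (-(2*t))) (at t)"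
      by (auto intro!: derivative_eq_intros)
    have d2: "((\<lambda>t. (1-t\<^sup>2) powr r) has_real_derivative r * (1-t\<^sup>2) powr (r - of_nat 1) * (-(2*t))) (at t)"
      by (rule DERIV_fun_powr[OF d1 pos])
    have d3: "((\<lambda>t. exp (c*t)) has_real_derivative exp (c*t) * c) (at t)"
      by (auto intro!: derivative_eq_intros)
    have "(F has_real_derivative (exp (c*t) * c * (1-t\<^sup>2) powr r + r * (1-t\<^sup>2) powr (r - of_nat 1) * (-(2*t)) * exp (c*t))) (at t)"
      unfolding F_def by (rule DERIV_mult[OF d3 d2])
    moreover have "exp (c*t) * c * (1-t\<^sup>2) powr r + r * (1-t\<^sup>2) powr (r - of_nat 1) * (-(2*t)) * exp (c*t) = F' t"
    proof -
      have e: "(1-t\<^sup>2) powr (r - of_nat 1) = (1-t\<^sup>2) powr (real n - 1/2)" using r(2) by simp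
      show ?thesis unfolding F'_def e by (simp add: r_def algebra_simps)
    qed
    ultimately show ?thesis by (simp add: has_real_derivative_iff_has_vector_derivative)
  qed
  have contF: "continuous_on {-1..1} F" unfolding F_def using w_cont[OF r(1)] .
  have "(F' has_integral (F 1 - F (-1))) {-1..1}"
    by (rule fundamental_theorem_of_calculus_interior[OF _ contF der]) auto
  moreover have "F 1 = 0" "F (-1) = 0" using r by (auto simp: F_def)
  ultimately have hi: "(F' has_integral 0) {-1..1}" by simp
  have c1: "continuous_on {-1..1} (\<lambda>t. exp (c*t) * (1-t\<^sup>2) powr r)" using w_cont[OF r(1)] .
  have c2: "continuous_on {-1..1} (\<lambda>t. t * (exp (c*t) * (1-t\<^sup>2) powr (real n - 1/2)))"
    using assms by (intro continuous_intros w_cont) auto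
  have i1: "(\<lambda>t. exp (c*t) * (1-t\<^sup>2) powr r) integrable_on {-1..1}"
    using c1 integrable_continuous_interval by blast
  have i2: "(\<lambda>t. t * (exp (c*t) * (1-t\<^sup>2) powr (real n - 1/2))) integrable_on {-1..1}"
    using c2 integrable_continuous_interval by blast
  have i1': "(\<lambda>t. c * (exp (c*t) * (1-t\<^sup>2) powr r)) integrable_on {-1..1}"
    by (rule integrable_continuous_interval) (intro continuous_intros c1)
  have i2': "(\<lambda>t. (2*real n+1) * (t * (exp (c*t) * (1-t\<^sup>2) powr (real n - 1/2)))) integrable_on {-1..1}"
    by (rule integrable_continuous_interval) (intro continuous_intros c2)
  have "integral {-1..1} F' = c * integral {-1..1} (\<lambda>t. exp (c*t) * (1-t\<^sup>2) powr r)
        - (2*real n+1) * integral {-1..1} (\<lambda>t. t * (exp (c*t) * (1-t\<^sup>2) powr (real n - 1/2)))"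
    unfolding F'_def
    by (subst integral_diff[OF i1' i2']) (simp add: integral_mult_right)
  with hi show ?thesis unfolding r_def by (simp add: integral_unique)
qed

lemma w_nonneg: "t \<in> {-1..1} \<Longrightarrow> 0 \<le> exp (c*t) * (1-t\<^sup>2) powr (r::real)"
  by simp

lemma K_le_J:
  assumes "n \<ge> (1::nat)"
  shows "integral {-1..1} (\<lambda>t. t * (exp (c*t) * (1-t\<^sup>2) powr (real n - 1/2)))
       \<le> integral {-1..1} (\<lambda>t. exp (c*t) * (1-t\<^sup>2) powr (real n - 1/2))"
proof (rule integral_le)
  show "(\<lambda>t. t * (exp (c*t) * (1-t\<^sup>2) powr (real n - 1/2))) integrable_on {-1..1}"
    using assms by (intro integrable_continuous_interval continuous_intros w_cont) auto
  show "(\<lambda>t. exp (c*t) * (1-t\<^sup>2) powr (real n - 1/2)) integrable_on {-1..1}"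
    using assms by (intro integrable_continuous_interval continuous_intros w_cont) auto
  fix t :: real assume t: "t \<in> {-1..1}"
  have "0 \<le> (1 - t) * (exp (c*t) * (1-t\<^sup>2) powr (real n - 1/2))"
    using t by (intro mult_nonneg_nonneg) auto
  then show "t * (exp (c*t) * (1-t\<^sup>2) powr (real n - 1/2)) \<le> exp (c*t) * (1-t\<^sup>2) powr (real n - 1/2)"
    by (simp add: algebra_simps)
qed

lemma besselI_nat:
  assumes "c > 0" "n \<ge> (1::nat)"
  shows "besselI (real n) c = (c/2)^n / (sqrt pi * Gamma (real n + 1/2)) *
           integral {-1..1} (\<lambda>t. exp (c*t) * (1-t\<^sup>2) powr (real n - 1/2))"
proof -
  have "(LBINT t=-1..1. exp (c * t) * (1 - t\<^sup>2) powr (real n - 1/2)) =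
        integral {-1..1} (\<lambda>t. exp (c*t) * (1-t\<^sup>2) powr (real n - 1/2))"
    using assms by (intro LBINT_eq_integral w_cont) auto
  then show ?thesis using assms unfolding besselI_def by (simp add: powr_realpow)
qed

lemma besselI_nonneg:
  assumes "c > 0" "n \<ge> (1::nat)"
  shows "besselI (real n) c \<ge> 0"
proof -
  have "integral {-1..1} (\<lambda>t. exp (c*t) * (1-t\<^sup>2) powr (real n - 1/2)) \<ge> 0"
    by (rule integral_nonneg) (use assms in \<open>auto intro!: integrable_continuous_interval w_cont\<close>)
  moreover have "Gamma (real n + 1/2) > 0" by (rule Gamma_real_pos) simp
  ultimately show ?thesis using assms by (simp add: besselI_nat)
qed

lemma besselI_mono:
  assumes "c > 0" "n \<ge> (1::nat)"
  shows "besselI (real (Suc n)) c \<le> besselI (real n) c"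
proof -
  define J where "J = integral {-1..1} (\<lambda>t. exp (c*t) * (1-t\<^sup>2) powr (real n - 1/2))"
  define K where "K = integral {-1..1} (\<lambda>t. t * (exp (c*t) * (1-t\<^sup>2) powr (real n - 1/2)))"
  define J1 where "J1 = integral {-1..1} (\<lambda>t. exp (c*t) * (1-t\<^sup>2) powr (real n + 1/2))"
  define G where "G = Gamma (real n + 1/2)"
  have G: "G > 0" unfolding G_def by (rule Gamma_real_pos) simp
  have GS: "Gamma (real (Suc n) + 1/2) = (real n + 1/2) * G"
  proof -
    have "real n + 1/2 \<notin> \<int>\<^sub>\<le>\<^sub>0" using nonpos_Ints_nonpos by force
    then show ?thesis unfolding G_def using Gamma_plus1[of "real n + 1/2"] by (simp add: algebra_simps)
  qed
  have ibp: "c * J1 = (2*real n+1) * K" unfolding J1_def K_def by (rule IBP[OF assms(2)])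
  have KJ: "K \<le> J" unfolding K_def J_def by (rule K_le_J[OF assms(2)])
  have e1: "real (Suc n) - 1/2 = real n + 1/2" by simp
  have b1: "besselI (real (Suc n)) c = (c/2)^Suc n / (sqrt pi * ((real n + 1/2) * G)) * J1"
    using besselI_nat[OF assms(1), of "Suc n"] unfolding J1_def GS e1 by simp
  have b0: "besselI (real n) c = (c/2)^n / (sqrt pi * G) * J"
    using besselI_nat[OF assms] unfolding J_def G_def by simp
  have "besselI (real (Suc n)) c = (c/2)^n / (sqrt pi * G) * ((c * J1) / (2*real n+1))"
    unfolding b1 using G by (simp add: field_simps)
  also have "\<dots> = (c/2)^n / (sqrt pi * G) * K" unfolding ibp by simp
  also have "\<dots> \<le> (c/2)^n / (sqrt pi * G) * J"
    using KJ G assms by (intro mult_left_mono) auto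
  finally show ?thesis unfolding b0 .
qed

lemma besselI_one_pos:
  assumes "c > 0"
  shows "besselI (real (1::nat)) c > 0"
proof -
  define g where "g t = exp (-c) * (1 - t\<^sup>2)" for t :: real
  define F where "F t = exp (-c) * (t - t^3/3)" for t :: real
  have "(g has_integral (F 1 - F (-1))) {-1..1}"
  proof (rule fundamental_theorem_of_calculus_interior)
    show "continuous_on {-1..1} F" unfolding F_def by (intro continuous_intros) auto
    fix x :: real assume "x \<in> {-1<..<1}"
    show "(F has_vector_derivative g x) (at x)"
      unfolding F_def g_def has_real_derivative_iff_has_vector_derivative[symmetric]
      by (auto intro!: derivative_eq_intros simp: power2_eq_square algebra_simps)
  qed simp
  then have gi: "(g has_integral 4 * exp (-c) / 3) {-1..1}" by (simp add: F_def)
  have "4 * exp (-c) / 3 \<le> integral {-1..1} (\<lambda>t. exp (c*t) * (1-t\<^sup>2) powr (real 1 - 1/2))"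
  proof (rule has_integral_le[OF gi])
    show "((\<lambda>t. exp (c*t) * (1-t\<^sup>2) powr (real 1 - 1/2)) has_integral
          integral {-1..1} (\<lambda>t. exp (c*t) * (1-t\<^sup>2) powr (real 1 - 1/2))) {-1..1}"
      by (rule integrable_integral, rule integrable_continuous_interval, rule w_cont) simp
    fix t :: real assume t: "t \<in> {-1..1}"
    have t2: "0 \<le> 1 - t\<^sup>2" "1 - t\<^sup>2 \<le> 1" using sq_le1[OF t] by auto
    have "exp (-c) \<le> exp (c*t)"
    proof -
      have "c * (-1) \<le> c * t" using t assms by (intro mult_left_mono) auto
      then show ?thesis by simp
    qed
    moreover have "1 - t\<^sup>2 \<le> (1-t\<^sup>2) powr (real 1 - 1/2)"
    proof -
      have "(1-t\<^sup>2) powr 1 \<le> (1-t\<^sup>2) powr (1/2)" by (rule powr_mono') (use t2 in auto)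
      then show ?thesis using t2 by simp
    qed
    ultimately show "g t \<le> exp (c*t) * (1-t\<^sup>2) powr (real 1 - 1/2)"
      unfolding g_def using t2 by (intro mult_mono) auto
  qed
  then have I: "integral {-1..1} (\<lambda>t. exp (c*t) * (1-t\<^sup>2) powr (real 1 - 1/2)) > 0"
    using exp_gt_zero[of "-c"] by linarith
  have G: "Gamma (real 1 + 1/2) > 0" by (rule Gamma_real_pos) simp
  have "besselI (real 1) c = (c/2)^1 / (sqrt pi * Gamma (real 1 + 1/2)) *
           integral {-1..1} (\<lambda>t. exp (c*t) * (1-t\<^sup>2) powr (real 1 - 1/2))"
    by (rule besselI_nat[OF assms]) simp
  also have "\<dots> > 0" using I G assms by (intro mult_pos_pos divide_pos_pos) auto
  finally show ?thesis .
qed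

lemma besselI_zero_pos:
  assumes "c > 0"
  shows "besselI 0 c > 0"
proof -
  define h where "h t = inverse (sqrt (1 - t\<^sup>2))" for t :: real
  define k where "k t = exp (c*t) * (1-t\<^sup>2) powr (0 - 1/2)" for t :: real
  define S where "S = einterval (ereal (-1)) (ereal 1)"
  have S: "S = {-1<..<1}" unfolding S_def by auto
  have p1: "ereal (-1) < ereal 1" by simp
  have p2: "DERIV arcsin x :> h x" if "ereal (-1) < ereal x" "ereal x < ereal 1" for x
  proof -
    have x: "-1 < x" "x < 1" using that by auto
    show ?thesis unfolding h_def by (rule DERIV_arcsin[OF x])
  qed
  have p3: "isCont h x" if "ereal (-1) < ereal x" "ereal x < ereal 1" for x
  proof -
    have x: "-1 < x" "x < 1" using that by auto
    have "1 - x\<^sup>2 > 0" using x by (simp add: abs_square_less_1 abs_less_iff)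
    then show "isCont h x" unfolding h_def by (intro continuous_intros) auto
  qed
  have p4: "AE x in lborel. ereal (-1) < ereal x \<longrightarrow> ereal x < ereal 1 \<longrightarrow> 0 \<le> h x"
    by (rule AE_I2) (auto simp: h_def abs_square_le_1 abs_le_iff)
  have p5: "((arcsin \<circ> real_of_ereal) \<longlongrightarrow> -pi/2) (at_right (ereal (-1)))"
  proof -
    have "(arcsin \<longlongrightarrow> arcsin (-1)) (at (-1) within {-1..1})"
      by (rule continuous_on_arcsin'[unfolded continuous_on_def, rule_format]) simp
    then have "(arcsin \<longlongrightarrow> -pi/2) (at_right (-1))"
      using at_within_Icc_at_right[of "-1::real" 1] by simp
    then show ?thesis unfolding ereal_tendsto_simps1 .
  qed
  have p6: "((arcsin \<circ> real_of_ereal) \<longlongrightarrow> pi/2) (at_left (ereal 1))"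
  proof -
    have "(arcsin \<longlongrightarrow> arcsin 1) (at 1 within {-1..1})"
      by (rule continuous_on_arcsin'[unfolded continuous_on_def, rule_format]) simp
    then have "(arcsin \<longlongrightarrow> pi/2) (at_left 1)"
      using at_within_Icc_at_left[of "-1::real" 1] by simp
    then show ?thesis unfolding ereal_tendsto_simps1 .
  qed
  note FTC = interval_integral_FTC_nonneg[OF p1 p2 p3 p4 p5 p6]
  have hS: "set_integrable lborel S h" using FTC(1) unfolding S_def .
  have hv: "(LINT x:S|lborel. h x) = pi"
    using FTC(2) unfolding S_def by (simp add: interval_lebesgue_integral_le_eq)
  have hpos: "h x \<ge> 0" if x: "x \<in> S" for x
  proof -
    have "1 - x\<^sup>2 > 0" using x S by (simp add: abs_square_less_1 abs_less_iff)
    then show ?thesis by (simp add: h_def)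
  qed
  have kh: "k t = exp (c*t) * h t" if "t \<in> S" for t
  proof -
    have "1 - t\<^sup>2 > 0" using that S by (simp add: abs_square_less_1 abs_less_iff)
    then show ?thesis unfolding k_def h_def
      by (simp add: powr_minus powr_half_sqrt)
  qed
  have kS: "set_integrable lborel S k"
  proof (rule set_integrable_bound[where f = "\<lambda>t. exp c * h t"])
    show "set_integrable lborel S (\<lambda>t. exp c * h t)"
      by (rule set_integrable_mult_right) (rule hS)
    show "set_borel_measurable lborel S k"
      unfolding set_borel_measurable_def k_def S by measurable
    show "AE x\<in>S in lborel. norm (k x) \<le> norm (exp c * h x)"
    proof (rule AE_I2, rule impI)
      fix x assume x: "x \<in> S"
      have "c * x \<le> c * 1" using x S assms by (intro mult_left_mono) auto
      then have "exp (c*x) \<le> exp c" by simp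
      moreover have "h x \<ge> 0" using hpos[OF x] .
      ultimately show "norm (k x) \<le> norm (exp c * h x)"
        using kh[OF x] by (simp add: abs_mult mult_right_mono)
    qed
  qed
  have "exp (-c) * pi \<le> (LINT x:S|lborel. k x)"
  proof -
    have "(LINT x:S|lborel. exp (-c) * h x) \<le> (LINT x:S|lborel. k x)"
    proof (rule set_integral_mono)
      show "set_integrable lborel S (\<lambda>t. exp (-c) * h t)"
        by (rule set_integrable_mult_right) (rule hS)
      show "set_integrable lborel S k" by (rule kS)
      fix x assume x: "x \<in> S"
      have "exp (-c) \<le> exp (c*x)"
      proof -
        have "c * (-1) \<le> c * x" using x S assms by (intro mult_left_mono) auto
        then show ?thesis by simp
      qed
      then show "exp (-c) * h x \<le> k x"
        using kh[OF x] hpos[OF x] by (simp add: mult_right_mono)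
    qed
    then show ?thesis by (simp add: set_integral_mult_right hv)
  qed
  then have pos: "(LINT x:S|lborel. k x) > 0" by (meson exp_gt_zero pi_gt_zero mult_pos_pos less_le_trans)
  have "(LBINT t=-1..1. exp (c * t) * (1 - t\<^sup>2) powr (0 - 1/2)) = (LINT x:S|lborel. k x)"
    unfolding S_def k_def by (simp add: interval_lebesgue_integral_le_eq one_ereal_def)
  moreover have "Gamma (0 + 1/2::real) > 0" by (rule Gamma_real_pos) simp
  ultimately show ?thesis using pos assms unfolding besselI_def by simp
qed


lemma mod6_parts: "(d::nat) mod 2 = (d mod 6) mod 2" "d mod 3 = (d mod 6) mod 3"
  by (simp_all add: mod_mod_cancel)
lemma mod6_cases: "(d::nat) mod 6 = 0 \<or> d mod 6 = 1 \<or> d mod 6 = 2 \<or> d mod 6 = 3 \<or> d mod 6 = 4 \<or> d mod 6 = 5"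
  by linarith
lemma odd6: "odd (d::nat) \<longleftrightarrow> (d mod 6) mod 2 = 1"
  using mod6_parts(1)[of d] by (simp add: odd_iff_mod_2_eq_one)
lemma dvd36: "3 dvd (d::nat) \<longleftrightarrow> (d mod 6) mod 3 = 0"
  unfolding dvd_eq_mod_eq_0 mod6_parts(2)[of d] ..
lemma mod6_l1: "(x::nat) mod 6 = 3 \<Longrightarrow> (x - 1) mod 6 = 2 \<and> x = Suc (x - 1)"
proof -
  assume h: "x mod 6 = 3"
  have e: "x = 6 * (x div 6) + 3" using h by (metis mult_div_mod_eq)
  then have x1: "x - 1 = 2 + 6 * (x div 6)" by linarith
  have "(2 + 6 * (x div 6)) mod 6 = 2 mod 6" by (rule mod_mult_self2)
  then have "(x - 1) mod 6 = 2" unfolding x1 by simp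
  moreover have "x = Suc (x - 1)" using e by linarith
  ultimately show ?thesis by blast
qed
lemma mod6_l2: "(y::nat) mod 6 = 2 \<Longrightarrow> Suc y mod 6 = 3" by (simp add: mod_Suc)
lemma set_PE: "{d::nat. d \<ge> 1 \<and> odd d \<and> \<not> 3 dvd d} \<inter> {d::nat. d mod 6 = 2} = {}"
  by (auto simp: odd6)
lemma set_PT: "{d::nat. d \<ge> 1 \<and> odd d \<and> \<not> 3 dvd d} \<inter> {d::nat. d mod 6 = 3} = {}"
  by (auto simp: dvd36)
lemma set_PEA: "{d::nat. d \<ge> 1 \<and> odd d \<and> \<not> 3 dvd d} \<union> {d::nat. d mod 6 = 2} \<subseteq> {d::nat. d \<ge> 1 \<and> \<not> 3 dvd d}"
proof
  fix d :: nat assume "d \<in> {d::nat. d \<ge> 1 \<and> odd d \<and> \<not> 3 dvd d} \<union> {d::nat. d mod 6 = 2}"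
  then show "d \<in> {d::nat. d \<ge> 1 \<and> \<not> 3 dvd d}"
  proof
    assume "d \<in> {d::nat. d mod 6 = 2}"
    then have "d mod 6 = 2" by simp
    moreover from this have "d \<noteq> 0" by auto
    ultimately show ?thesis by (simp add: dvd36)
  qed auto
qed
lemma set_BPT: "{d::nat. d \<ge> 1 \<and> odd d} = {d::nat. d \<ge> 1 \<and> odd d \<and> \<not> 3 dvd d} \<union> {d::nat. d mod 6 = 3}"
proof (rule set_eqI, rule iffI)
  fix d :: nat assume "d \<in> {d::nat. d \<ge> 1 \<and> odd d}"
  then show "d \<in> {d::nat. d \<ge> 1 \<and> odd d \<and> \<not> 3 dvd d} \<union> {d::nat. d mod 6 = 3}"
    using mod6_cases[of d] by (auto simp: odd6 dvd36)
next
  fix d :: nat assume h: "d \<in> {d::nat. d \<ge> 1 \<and> odd d \<and> \<not> 3 dvd d} \<union> {d::nat. d mod 6 = 3}"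
  show "d \<in> {d::nat. d \<ge> 1 \<and> odd d}"
  proof (cases "d mod 6 = 3")
    case True
    then have "d \<noteq> 0" by auto
    with True show ?thesis by (simp add: odd6)
  qed (use h in auto)
qed
lemma set_img: "{d::nat. d mod 6 = 3} = Suc ` {d::nat. d mod 6 = 2}"
  apply (rule set_eqI) apply (rule iffI)
  apply (simp add: image_iff) apply (metis mod6_l1)
  using mod6_l2 by auto

lemma lam_facts:
  assumes c: "c > 0"
  shows "\<And>d. 0 \<le> lam c d"
    and "\<And>d. d \<ge> 1 \<Longrightarrow> lam c (Suc d) \<le> lam c d"
    and "\<And>d. d \<ge> 1 \<Longrightarrow> lam c d \<le> lam c 1"
    and "lam c 1 > 0"
proof -
  have I0: "besselI 0 c > 0" by (rule besselI_zero_pos[OF c])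
  show nn: "0 \<le> lam c d" for d
  proof (cases "d = 0")
    case True then show ?thesis using I0 by (simp add: lam_def)
  next
    case False then show ?thesis using I0 besselI_nonneg[OF c, of d] by (simp add: lam_def)
  qed
  show mono: "lam c (Suc d) \<le> lam c d" if "d \<ge> 1" for d
    using besselI_mono[OF c that] I0 unfolding lam_def by (simp add: divide_right_mono)
  show "lam c d \<le> lam c 1" if "d \<ge> 1" for d
    using that
  proof (induction d rule: dec_induct)
    case base then show ?case by simp
  next
    case (step m) then show ?case using mono[of m] by simp
  qed
  show "lam c 1 > 0" using I0 besselI_one_pos[OF c] by (simp add: lam_def)
qed

theorem mainTheorem13:
  fixes c :: real
  assumes "c > 0"
  shows "9 / (2 * pi\<^sup>2) * (\<Sum>\<^sub>\<infinity>d\<in>{d::nat. d \<ge> 1 \<and> \<not> 3 dvd d}. lam c d / (real d)\<^sup>2)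
       > 4 / pi\<^sup>2 * (\<Sum>\<^sub>\<infinity>d\<in>{d::nat. d \<ge> 1 \<and> odd d}. lam c d / (real d)\<^sup>2)"
proof -
  note L = lam_facts[OF assms]
  define a where "a d = lam c d / (real d)\<^sup>2" for d :: nat
  have a_nn: "a d \<ge> 0" for d unfolding a_def using L(1) by simp
  have a_le: "a d \<le> lam c 1 * inverse (real d ^ 2)" for d
  proof (cases "d = 0")
    case True then show ?thesis by (simp add: a_def)
  next
    case False then show ?thesis using L(3)[of d] by (simp add: a_def divide_right_mono field_simps)
  qed
  have sum_inv: "(\<lambda>d. lam c 1 * inverse (real d ^ 2)) summable_on UNIV"
  proof -
    have "summable (\<lambda>d. lam c 1 * inverse (real d ^ 2))"
      by (intro summable_mult inverse_power_summable) simp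
    then show ?thesis using L(4) by (subst summable_on_UNIV_nonneg_real_iff) auto
  qed
  have sa: "a summable_on X" for X
  proof -
    have "a summable_on UNIV"
      by (rule summable_on_comparison_test[OF sum_inv]) (rule a_le, rule a_nn)
    then show ?thesis by (rule summable_on_subset) simp
  qed
  define A where "A = {d::nat. d \<ge> 1 \<and> \<not> 3 dvd d}"
  define B where "B = {d::nat. d \<ge> 1 \<and> odd d}"
  define P where "P = {d::nat. d \<ge> 1 \<and> odd d \<and> \<not> 3 dvd d}"
  define E where "E = {d::nat. d mod 6 = 2}"
  define T where "T = {d::nat. d mod 6 = 3}"
  have PE: "P \<inter> E = {}" unfolding P_def E_def by (rule set_PE)
  have PT: "P \<inter> T = {}" unfolding P_def T_def by (rule set_PT)
  have PEA: "P \<union> E \<subseteq> A" unfolding P_def E_def A_def by (rule set_PEA)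
  have BPT: "B = P \<union> T" unfolding B_def P_def T_def by (rule set_BPT)
  have sA: "infsum a A \<ge> infsum a P + infsum a E"
  proof -
    have "infsum a (P \<union> E) \<le> infsum a A"
      by (rule infsum_mono2[OF sa sa PEA]) (simp add: a_nn)
    then show ?thesis using infsum_Un_disjoint[OF sa sa PE] by simp
  qed
  have sB: "infsum a B = infsum a P + infsum a T"
    unfolding BPT by (rule infsum_Un_disjoint[OF sa sa PT])
  have TE: "infsum a T \<le> infsum a E"
  proof -
    have img: "T = Suc ` E" unfolding T_def E_def by (rule set_img)
    have "infsum a T = infsum (a \<circ> Suc) E" unfolding img by (rule infsum_reindex) simp
    also have "\<dots> \<le> infsum a E"
    proof (rule infsum_mono)
      show "(a \<circ> Suc) summable_on E"
        using sa[of T] unfolding img by (subst (asm) summable_on_reindex) simp_all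
      show "a summable_on E" by (rule sa)
      fix x assume x: "x \<in> E"
      then have x1: "x \<ge> 1" unfolding E_def by auto
      have "lam c (Suc x) / (real (Suc x))\<^sup>2 \<le> lam c x / (real (Suc x))\<^sup>2"
        using L(2)[OF x1] by (simp add: divide_right_mono)
      also have "\<dots> \<le> lam c x / (real x)\<^sup>2"
        using L(1)[of x] x1 by (intro divide_left_mono) auto
      finally show "(a \<circ> Suc) x \<le> a x" by (simp add: a_def)
    qed
    finally show ?thesis .
  qed
  have sP: "infsum a P \<ge> a 1"
  proof -
    have "infsum a {1} \<le> infsum a P"
      by (rule infsum_mono2[OF sa sa]) (auto simp: P_def a_nn)
    then show ?thesis by simp
  qed
  have a1: "a 1 > 0" using L(4) by (simp add: a_def)
  define S where "S = infsum a P + infsum a E"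
  have E0: "infsum a E \<ge> 0" by (rule infsum_nonneg) (simp add: a_nn)
  have S0: "S > 0" unfolding S_def using sP a1 E0 by linarith
  have pi2: "pi\<^sup>2 > 0" by simp
  have "4 / pi\<^sup>2 * infsum a B \<le> 4 / pi\<^sup>2 * S"
    unfolding sB S_def using TE pi2 by (intro mult_left_mono) auto
  also have "\<dots> < 9 / (2 * pi\<^sup>2) * S"
    using S0 pi2 by (simp add: field_simps)
  also have "\<dots> \<le> 9 / (2 * pi\<^sup>2) * infsum a A"
    unfolding S_def using sA pi2 by (intro mult_left_mono) auto
  finally show ?thesis unfolding a_def A_def B_def .
qed
end
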